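(* Define $s(n)$ by $$\sum_{n=0}^{\infty}s(n)q^n=\sum_{n=0}^{\infty}\frac{(-1;q^2)_nq^{n(n+1)}}{(q;q)_{2n}}=\frac{(-q^2;q^2)_\infty}{(q^2;q^2)_\infty}(q^6,-q^3,-q^3;q^6)_\infty.$$ Then for all integers $n\ge0$: $$s(24n+i)\equiv0\pmod4\ \ (i=9,15,21),\qquad s(24n+23)\equiv0\pmod8,\qquad s(24n+17)\equiv0\pmod8,\qquad s(12n+1)\equiv0\pmod{16}.$$
   Context: $(A;q)_0=1$, $(A;q)_n=\prod_{j=0}^{n-1}(1-Aq^j)$, $(A;q)_\infty=\prod_{j\ge0}(1-Aq^j)$, and $(A_1,\dots,A_r;q)_\infty=\prod_i(A_i;q)_\infty$. *)

theory Defs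
  imports "HOL-Computational_Algebra.Formal_Power_Series"
begin

definition qpoch :: "int fps \<Rightarrow> int fps \<Rightarrow> nat \<Rightarrow> int fps" where
  "qpoch a b n = (\<Prod>j<n. 1 - a * b ^ j)"

(* the formal power series expansion of 1/(1 - q^j), j >= 1 (geometric series) *)
definition inv_one_minus_Xpow :: "nat \<Rightarrow> int fps" where
  "inv_one_minus_Xpow j = Abs_fps (\<lambda>m. if j dvd m then 1 else 0)"

definition inv_qpoch_q :: "nat \<Rightarrow> int fps" where
  "inv_qpoch_q m = (\<Prod>j\<in>{1..m}. inv_one_minus_Xpow j)"

definition s_term :: "nat \<Rightarrow> int fps" where
  "s_term k = qpoch (-1) (fps_X ^ 2) k * fps_X ^ (k * (k + 1)) * inv_qpoch_q (2 * k)"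

(* s(n) = coefficient of q^n in sum_{k>=0} s_term k; summands with k > n have
   order k(k+1) > n, so the sum may be truncated at k = n. *)
definition s :: "nat \<Rightarrow> int" where
  "s n = (\<Sum>k\<le>n. fps_nth (s_term k) n)"


end

theory Submission
  imports Defs
begin

definition tri :: "nat \<Rightarrow> nat" where "tri m = (\<Sum>i<m. i)"

lemma tri_Suc: "tri (Suc k) = tri k + k" by (simp add: tri_def)
lemma tri_0[simp]: "tri 0 = 0" by (simp add: tri_def)
lemma two_tri: "2 * tri m = m * (m - 1)"
proof (induction m)
  case 0 then show ?case by simp
next
  case (Suc m)
  have "2 * tri (Suc m) = m * (m - 1) + 2 * m" using Suc by (simp add: tri_Suc)
  also have "\<dots> = Suc m * (Suc m - 1)" by (cases m) auto
  finally show ?case .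
qed

definition qfac :: "'a::comm_ring_1 \<Rightarrow> nat \<Rightarrow> 'a" where
  "qfac Q k = (\<Prod>i=1..k. 1 - Q^i)"

lemma qfac_0[simp]: "qfac Q 0 = 1" by (simp add: qfac_def)
lemma qfac_Suc: "qfac Q (Suc k) = qfac Q k * (1 - Q^Suc k)"
  by (simp add: qfac_def)

fun qbin :: "'a::comm_ring_1 \<Rightarrow> nat \<Rightarrow> nat \<Rightarrow> 'a" where
  "qbin Q 0 m = (if m = 0 then 1 else 0)"
| "qbin Q (Suc N) m = qbin Q N m + (case m of 0 \<Rightarrow> 0 | Suc k \<Rightarrow> Q^(N - k) * qbin Q N k)"

lemma qbin_gt: "N < m \<Longrightarrow> qbin Q N m = 0"
  by (induction N arbitrary: m) (auto split: nat.splits)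

lemma qbin_N0[simp]: "qbin Q N 0 = 1"
  by (induction N) auto

lemma qbin_fac: "m \<le> N \<Longrightarrow> qbin Q N m * qfac Q m * qfac Q (N - m) = qfac Q N"
proof (induction N arbitrary: m)
  case 0 then show ?case by simp
next
  case (Suc N)
  show ?case
  proof (cases m)
    case 0 then show ?thesis by simp
  next
    case (Suc k)
    have A: "qbin Q N k * qfac Q k * qfac Q (N - k) = qfac Q N"
      using Suc.IH[of k] Suc.prems \<open>m = Suc k\<close> by simp
    show ?thesis
    proof (cases "m = Suc N")
      case True
      then have "k = N" using Suc by simp
      then have A': "qbin Q N N * qfac Q N = qfac Q N" using A by simp
      have "qbin Q (Suc N) m * qfac Q m * qfac Q (Suc N - m) = (qbin Q N N * qfac Q N) * (1 - Q^Suc N)"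
        using True by (simp add: qbin_gt qfac_Suc algebra_simps)
      then show ?thesis using A' True by (simp add: qfac_Suc)
    next
      case False
      then have mN: "m \<le> N" using Suc.prems by simp
      have B: "qbin Q N m * qfac Q m * qfac Q (N - m) = qfac Q N" using Suc.IH mN by simp
      have e1: "Suc N - m = Suc (N - m)" using mN by simp
      have e2: "N - k = Suc (N - m)" using mN \<open>m = Suc k\<close> by simp
      have "qbin Q (Suc N) m * qfac Q m * qfac Q (Suc N - m)
          = qbin Q N m * qfac Q m * qfac Q (N - m) * (1 - Q^Suc (N - m))
            + Q^(N-k) * (qbin Q N k * qfac Q k * qfac Q (N - k)) * (1 - Q^Suc k)"
        using \<open>m = Suc k\<close> e1 e2 by (simp add: qfac_Suc algebra_simps)
      also have "\<dots> = qfac Q N * (1 - Q^Suc (N - m)) + Q^(Suc (N - m)) * qfac Q N * (1 - Q^m)"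
        using A B e2 \<open>m = Suc k\<close> by simp
      also have "\<dots> = qfac Q N * (1 - Q^(Suc (N - m) + m))"
        by (simp add: algebra_simps power_add)
      also have "Suc (N - m) + m = Suc N" using mN by simp
      finally show ?thesis by (simp add: qfac_Suc)
    qed
  qed
qed

definition cq :: "'a::comm_ring_1 \<Rightarrow> nat \<Rightarrow> 'a" where
  "cq Q m = (-1)^m * Q^(tri m)"

lemma cq_0[simp]: "cq Q 0 = 1" by (simp add: cq_def)

lemma cq_Suc: "cq Q (Suc k) = - (Q^k * cq Q k)"
  by (simp add: cq_def tri_Suc power_add algebra_simps)

lemma vstar:
  fixes Q x :: "'a::comm_ring_1"
  shows "(\<Sum>m\<le>N. qbin Q N m * cq Q m * (\<Prod>i=1..m. x - e*Q^i) * (\<Prod>i=Suc m..N. 1 - e*Q^i))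
         = (\<Prod>i<N. 1 - x*Q^i)"
proof (induction N arbitrary: e)
  case 0 then show ?case by simp
next
  case (Suc N)
  define T where "T e = (\<Sum>m\<le>N. qbin Q N m * cq Q m * (\<Prod>i=1..m. x - e*Q^i) * (\<Prod>i=Suc m..N. 1 - e*Q^i))" for e
  have S1: "(\<Sum>m\<le>Suc N. qbin Q N m * cq Q m * (\<Prod>i=1..m. x - e*Q^i) * (\<Prod>i=Suc m..Suc N. 1 - e*Q^i))
      = (1 - e*Q^Suc N) * T e"
  proof -
    have "(\<Sum>m\<le>Suc N. qbin Q N m * cq Q m * (\<Prod>i=1..m. x - e*Q^i) * (\<Prod>i=Suc m..Suc N. 1 - e*Q^i))
       = (\<Sum>m\<le>N. qbin Q N m * cq Q m * (\<Prod>i=1..m. x - e*Q^i) * (\<Prod>i=Suc m..Suc N. 1 - e*Q^i))"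
      by (simp add: qbin_gt)
    also have "\<dots> = (\<Sum>m\<le>N. (1 - e*Q^Suc N) * (qbin Q N m * cq Q m * (\<Prod>i=1..m. x - e*Q^i) * (\<Prod>i=Suc m..N. 1 - e*Q^i)))"
      by (intro sum.cong refl) (simp add: prod.nat_ivl_Suc' algebra_simps)
    finally show ?thesis by (simp add: T_def sum_distrib_left)
  qed
  have S2: "(\<Sum>m\<le>Suc N. (case m of 0 \<Rightarrow> 0 | Suc k \<Rightarrow> Q^(N - k) * qbin Q N k) * cq Q m * (\<Prod>i=1..m. x - e*Q^i) * (\<Prod>i=Suc m..Suc N. 1 - e*Q^i))
      = - (Q^N * (x - e*Q)) * T (e*Q)"
  proof -
    have "(\<Sum>m\<le>Suc N. (case m of 0 \<Rightarrow> 0 | Suc k \<Rightarrow> Q^(N - k) * qbin Q N k) * cq Q m * (\<Prod>i=1..m. x - e*Q^i) * (\<Prod>i=Suc m..Suc N. 1 - e*Q^i))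
      = (\<Sum>k\<le>N. Q^(N - k) * qbin Q N k * cq Q (Suc k) * (\<Prod>i=1..Suc k. x - e*Q^i) * (\<Prod>i=Suc (Suc k)..Suc N. 1 - e*Q^i))"
      by (subst sum.atMost_Suc_shift) simp
    also have "\<dots> = (\<Sum>k\<le>N. - (Q^N * (x - e*Q)) * (qbin Q N k * cq Q k * (\<Prod>i=1..k. x - (e*Q)*Q^i) * (\<Prod>i=Suc k..N. 1 - (e*Q)*Q^i)))"
    proof (intro sum.cong refl)
      fix k assume k: "k \<in> {..N}"
      have p1: "(\<Prod>i=1..Suc k. x - e*Q^i) = (x - e*Q) * (\<Prod>i=1..k. x - (e*Q)*Q^i)"
      proof -
        have "(\<Prod>i=1..Suc k. x - e*Q^i) = (x - e*Q^1) * (\<Prod>i=Suc 1..Suc k. x - e*Q^i)"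
          by (subst prod.atLeast_Suc_atMost) auto
        also have "(\<Prod>i=Suc 1..Suc k. x - e*Q^i) = (\<Prod>i=1..k. x - e*Q^(Suc i))"
          by (rule prod.shift_bounds_cl_Suc_ivl)
        finally show ?thesis by (simp add: algebra_simps)
      qed
      have p2: "(\<Prod>i=Suc (Suc k)..Suc N. 1 - e*Q^i) = (\<Prod>i=Suc k..N. 1 - (e*Q)*Q^i)"
        by (subst prod.shift_bounds_cl_Suc_ivl) (simp add: algebra_simps)
      have qq: "Q^(N-k) * Q^k = Q^N" using k by (simp add: power_add[symmetric])
      show "Q^(N - k) * qbin Q N k * cq Q (Suc k) * (\<Prod>i=1..Suc k. x - e*Q^i) * (\<Prod>i=Suc (Suc k)..Suc N. 1 - e*Q^i)
         = - (Q^N * (x - e*Q)) * (qbin Q N k * cq Q k * (\<Prod>i=1..k. x - (e*Q)*Q^i) * (\<Prod>i=Suc k..N. 1 - (e*Q)*Q^i))"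
        unfolding p1 p2 cq_Suc qq[symmetric] by (simp add: algebra_simps)
    qed
    finally show ?thesis by (simp add: T_def sum_distrib_left)
  qed
  have "(\<Sum>m\<le>Suc N. qbin Q (Suc N) m * cq Q m * (\<Prod>i=1..m. x - e*Q^i) * (\<Prod>i=Suc m..Suc N. 1 - e*Q^i))
     = (\<Sum>m\<le>Suc N. qbin Q N m * cq Q m * (\<Prod>i=1..m. x - e*Q^i) * (\<Prod>i=Suc m..Suc N. 1 - e*Q^i))
     + (\<Sum>m\<le>Suc N. (case m of 0 \<Rightarrow> 0 | Suc k \<Rightarrow> Q^(N - k) * qbin Q N k) * cq Q m * (\<Prod>i=1..m. x - e*Q^i) * (\<Prod>i=Suc m..Suc N. 1 - e*Q^i))"
    by (simp add: sum.distrib[symmetric] algebra_simps)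
  also have "\<dots> = (1 - e*Q^Suc N) * T e - (Q^N * (x - e*Q)) * T (e*Q)" using S1 S2 by simp
  also have "\<dots> = (\<Prod>i<N. 1 - x*Q^i) * (1 - x*Q^N)"
    using Suc.IH[of e] Suc.IH[of "e*Q"] unfolding T_def by (simp add: algebra_simps)
  finally show ?case by simp
qed

lemma qbinom:
  fixes Q x y :: "'a::comm_ring_1"
  shows "(\<Sum>m\<le>N. qbin Q N m * cq Q m * x^m * y^(N-m)) = (\<Prod>i<N. y - x*Q^i)"
proof (induction N)
  case 0 then show ?case by simp
next
  case (Suc N)
  define T where "T = (\<Sum>m\<le>N. qbin Q N m * cq Q m * x^m * y^(N-m))"
  have S1: "(\<Sum>m\<le>Suc N. qbin Q N m * cq Q m * x^m * y^(Suc N-m)) = y * T"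
    by (simp add: qbin_gt T_def sum_distrib_left Suc_diff_le algebra_simps)
  have S2: "(\<Sum>m\<le>Suc N. (case m of 0 \<Rightarrow> 0 | Suc k \<Rightarrow> Q^(N - k) * qbin Q N k) * cq Q m * x^m * y^(Suc N-m))
      = - (Q^N * x) * T"
  proof -
    have "(\<Sum>m\<le>Suc N. (case m of 0 \<Rightarrow> 0 | Suc k \<Rightarrow> Q^(N - k) * qbin Q N k) * cq Q m * x^m * y^(Suc N-m))
      = (\<Sum>k\<le>N. Q^(N - k) * qbin Q N k * cq Q (Suc k) * x^Suc k * y^(N-k))"
      by (subst sum.atMost_Suc_shift) simp
    also have "\<dots> = (\<Sum>k\<le>N. - (Q^N * x) * (qbin Q N k * cq Q k * x^k * y^(N-k)))"
    proof (intro sum.cong refl)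
      fix k assume k: "k \<in> {..N}"
      have qq: "Q^(N-k) * Q^k = Q^N" using k by (simp add: power_add[symmetric])
      show "Q^(N - k) * qbin Q N k * cq Q (Suc k) * x^Suc k * y^(N-k) = - (Q^N * x) * (qbin Q N k * cq Q k * x^k * y^(N-k))"
        unfolding cq_Suc qq[symmetric] by (simp add: algebra_simps)
    qed
    finally show ?thesis by (simp add: T_def sum_distrib_left)
  qed
  have "(\<Sum>m\<le>Suc N. qbin Q (Suc N) m * cq Q m * x^m * y^(Suc N-m))
     = (\<Sum>m\<le>Suc N. qbin Q N m * cq Q m * x^m * y^(Suc N-m))
     + (\<Sum>m\<le>Suc N. (case m of 0 \<Rightarrow> 0 | Suc k \<Rightarrow> Q^(N - k) * qbin Q N k) * cq Q m * x^m * y^(Suc N-m))"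
    by (simp add: sum.distrib[symmetric] algebra_simps)
  also have "\<dots> = (\<Prod>i<N. y - x*Q^i) * (y - x*Q^N)"
    using S1 S2 Suc.IH unfolding T_def by (simp add: algebra_simps)
  finally show ?case by simp
qed

lemma tri_add: "tri (m + r) = tri m + tri r + m * r"
  by (induction m) (auto simp: tri_Suc algebra_simps)

lemma cq_add: "cq Q (m + r) = cq Q r * cq Q m * Q^(r*m)"
  by (simp add: cq_def tri_add power_add algebra_simps)

lemma prod_split1: "a \<le> b \<Longrightarrow> (\<Prod>i=1..b. f i) = (\<Prod>i=1..a. f i) * (\<Prod>i=Suc a..b. (f i :: 'a::comm_monoid_mult))"
  using prod.ub_add_nat[of 1 a f "b - a"] by simp

lemma prod_shift_r: "(\<Prod>i=Suc a..b + r. f i) = (\<Prod>i=Suc a - r..b. (f (i + r) :: 'a::comm_monoid_mult))" if "r \<le> a"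
proof -
  have e: "Suc a - r + r = Suc a" using that by simp
  show ?thesis using prod.shift_bounds_cl_nat_ivl[of f "Suc a - r" r b] unfolding e .
qed

definition uq :: "'a::comm_ring_1 \<Rightarrow> 'a \<Rightarrow> nat \<Rightarrow> 'a" where
  "uq Q b j = (\<Prod>i=1..j. b - Q^i) * cq Q j"

definition bp :: "'a::comm_ring_1 \<Rightarrow> 'a \<Rightarrow> nat \<Rightarrow> nat \<Rightarrow> 'a" where
  "bp Q b r k = (\<Prod>i<k. 1 - b * Q^(r+i))"

lemma iQ_split:
  fixes Q :: "'a::comm_ring_1"
  assumes inv: "\<And>k. qfac Q k * iQ k = 1" and ab: "a \<le> b"
  shows "iQ a = (\<Prod>i=Suc a..b. 1 - Q^i) * iQ b"
proof -
  have f: "qfac Q b = qfac Q a * (\<Prod>i=Suc a..b. 1 - Q^i)"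
    unfolding qfac_def using prod_split1[OF ab] .
  have "iQ a = iQ a * (qfac Q b * iQ b)" using inv[of b] by simp
  also have "\<dots> = (qfac Q a * iQ a) * (\<Prod>i=Suc a..b. 1 - Q^i) * iQ b" by (simp add: f algebra_simps)
  finally show ?thesis using inv[of a] by simp
qed

lemma iQ_bin:
  fixes Q :: "'a::comm_ring_1"
  assumes inv: "\<And>k. qfac Q k * iQ k = 1" and mN: "m \<le> N"
  shows "iQ (N - m) * iQ m = qbin Q N m * iQ N"
proof -
  have "qbin Q N m * iQ N = qbin Q N m * iQ N * ((qfac Q m * iQ m) * (qfac Q (N-m) * iQ (N-m)))"
    using inv by simp
  also have "\<dots> = (qbin Q N m * qfac Q m * qfac Q (N-m)) * iQ N * iQ m * iQ (N-m)"
    by (simp add: algebra_simps)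
  also have "\<dots> = (qfac Q N * iQ N) * iQ m * iQ (N-m)" by (simp only: qbin_fac[OF mN, of Q])
  finally show ?thesis using inv[of N] by simp
qed

lemma Vp:
  fixes Q b :: "'a::comm_ring_1"
  assumes inv: "\<And>k. qfac Q k * iQ k = 1" and rn: "r \<le> n"
  shows "(\<Sum>j=r..n. uq Q b j * iQ (n-j) * iQ (j-r) * iQ (j+r))
        = uq Q b r * bp Q b r (n-r) * iQ (n-r) * iQ (n+r)"
proof -
  obtain N where nN: "n = N + r" using rn by (metis le_add_diff_inverse2)
  define x where "x = b * Q^r"
  define e where "e = Q^(2*r)"
  have "(\<Sum>j=r..n. uq Q b j * iQ (n-j) * iQ (j-r) * iQ (j+r))
      = (\<Sum>m=0..N. uq Q b (m+r) * iQ (n-(m+r)) * iQ (m+r-r) * iQ (m+r+r))"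
    using sum.shift_bounds_cl_nat_ivl[of "\<lambda>j. uq Q b j * iQ (n-j) * iQ (j-r) * iQ (j+r)" 0 r N] nN by simp
  also have "\<dots> = (\<Sum>m\<le>N. (uq Q b r * iQ N * iQ (N + 2*r)) *
       (qbin Q N m * cq Q m * (\<Prod>i=1..m. x - e*Q^i) * (\<Prod>i=Suc m..N. 1 - e*Q^i)))"
    unfolding atLeast0AtMost
  proof (intro sum.cong refl)
    fix m assume "m \<in> {..N}"
    then have mN: "m \<le> N" by simp
    have u1: "(\<Prod>i=1..m+r. b - Q^i) = (\<Prod>i=1..r. b - Q^i) * (\<Prod>i=1..m. b - Q^(i+r))"
    proof -
      have "(\<Prod>i=1..m+r. b - Q^i) = (\<Prod>i=1..r. b - Q^i) * (\<Prod>i=Suc r..m+r. b - Q^i)"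
        by (rule prod_split1) simp
      also have "(\<Prod>i=Suc r..m+r. b - Q^i) = (\<Prod>i=1..m. b - Q^(i+r))"
        using prod_shift_r[of r r "\<lambda>i. b - Q^i" m] by simp
      finally show ?thesis .
    qed
    have u2: "Q^(r*m) * (\<Prod>i=1..m. b - Q^(i+r)) = (\<Prod>i=1..m. x - e*Q^i)"
    proof -
      have "Q^(r*m) = (\<Prod>i=1..m. Q^r)" by (simp add: power_mult)
      then have "Q^(r*m) * (\<Prod>i=1..m. b - Q^(i+r)) = (\<Prod>i=1..m. Q^r * (b - Q^(i+r)))"
        by (simp add: prod.distrib)
      also have "\<dots> = (\<Prod>i=1..m. x - e*Q^i)"
        by (intro prod.cong refl) (simp add: x_def e_def algebra_simps power_add mult_2 mult_2_right)
      finally show ?thesis .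
    qed
    have U: "uq Q b (m+r) = uq Q b r * cq Q m * (\<Prod>i=1..m. x - e*Q^i)"
      unfolding uq_def u1 cq_add u2[symmetric] by (simp add: algebra_simps)
    have I1: "iQ (N - m) * iQ m = qbin Q N m * iQ N" by (rule iQ_bin[OF inv mN])
    have I2: "iQ (m + 2*r) = (\<Prod>i=Suc m..N. 1 - e*Q^i) * iQ (N + 2*r)"
    proof -
      have "iQ (m + 2*r) = (\<Prod>i=Suc (m+2*r)..N+2*r. 1 - Q^i) * iQ (N + 2*r)"
        by (rule iQ_split[OF inv]) (use mN in simp)
      also have "(\<Prod>i=Suc (m+2*r)..N+2*r. 1 - Q^i) = (\<Prod>i=Suc m..N. 1 - e*Q^i)"
        using prod_shift_r[of "2*r" "m+2*r" "\<lambda>i. 1 - Q^i" N]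
        by (simp add: e_def power_add algebra_simps)
      finally show ?thesis .
    qed
    have idx: "n - (m + r) = N - m" "m + r - r = m" "m + r + r = m + 2*r" using nN by auto
    show "uq Q b (m+r) * iQ (n-(m+r)) * iQ (m+r-r) * iQ (m+r+r) =
        (uq Q b r * iQ N * iQ (N + 2*r)) *
       (qbin Q N m * cq Q m * (\<Prod>i=1..m. x - e*Q^i) * (\<Prod>i=Suc m..N. 1 - e*Q^i))"
    proof -
      have "uq Q b (m+r) * iQ (n-(m+r)) * iQ (m+r-r) * iQ (m+r+r)
          = uq Q b r * cq Q m * (\<Prod>i=1..m. x - e*Q^i) * (iQ (N - m) * iQ m) * ((\<Prod>i=Suc m..N. 1 - e*Q^i) * iQ (N + 2*r))"
        unfolding idx U I2 by (simp only: mult.assoc mult.left_commute)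
      also have "\<dots> = uq Q b r * cq Q m * (\<Prod>i=1..m. x - e*Q^i) * (qbin Q N m * iQ N) * ((\<Prod>i=Suc m..N. 1 - e*Q^i) * iQ (N + 2*r))"
        unfolding I1 ..
      finally show ?thesis by (simp only: mult.assoc mult.left_commute mult.commute)
    qed
  qed
  also have "\<dots> = uq Q b r * iQ N * iQ (N + 2*r) * (\<Prod>i<N. 1 - x*Q^i)"
    using vstar[of Q N x e] by (simp add: sum_distrib_left[symmetric])
  also have "(\<Prod>i<N. 1 - x*Q^i) = bp Q b r N"
    unfolding bp_def x_def by (intro prod.cong refl) (simp add: power_add algebra_simps)
  finally have F: "(\<Sum>j=r..n. uq Q b j * iQ (n-j) * iQ (j-r) * iQ (j+r)) = uq Q b r * iQ N * iQ (N + 2*r) * bp Q b r N" .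
  have h1: "N + 2*r = n + r" and h2: "n - r = N" using nN by auto
  show ?thesis unfolding F h1 h2 by (simp only: mult.assoc mult.left_commute mult.commute)
qed

lemma bailey:
  fixes Q b :: "'a::comm_ring_1"
  assumes inv: "\<And>k. qfac Q k * iQ k = 1"
    and pair: "\<And>j. j \<le> n \<Longrightarrow> \<beta> j = (\<Sum>r\<le>j. \<alpha> r * iQ (j-r) * iQ (j+r))"
  shows "(\<Sum>j\<le>n. uq Q b j * \<beta> j * iQ (n-j))
       = (\<Sum>r\<le>n. uq Q b r * \<alpha> r * bp Q b r (n-r) * iQ (n-r) * iQ (n+r))"
proof -
  have "(\<Sum>j\<le>n. uq Q b j * \<beta> j * iQ (n-j))
      = (\<Sum>j\<le>n. \<Sum>r\<in>{r. r \<in> {..n} \<and> r \<le> j}. \<alpha> r * (uq Q b j * iQ (n-j) * iQ (j-r) * iQ (j+r)))"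
  proof (intro sum.cong refl)
    fix j assume "j \<in> {..n}"
    then have j: "j \<le> n" by simp
    have s: "{r. r \<in> {..n} \<and> r \<le> j} = {..j}" using j by auto
    show "uq Q b j * \<beta> j * iQ (n-j) = (\<Sum>r\<in>{r. r \<in> {..n} \<and> r \<le> j}. \<alpha> r * (uq Q b j * iQ (n-j) * iQ (j-r) * iQ (j+r)))"
      unfolding s pair[OF j] by (simp add: sum_distrib_left sum_distrib_right algebra_simps)
  qed
  also have "\<dots> = (\<Sum>r\<le>n. \<Sum>j\<in>{j. j \<in> {..n} \<and> r \<le> j}. \<alpha> r * (uq Q b j * iQ (n-j) * iQ (j-r) * iQ (j+r)))"
    by (rule sum.swap_restrict) auto
  also have "\<dots> = (\<Sum>r\<le>n. \<alpha> r * (uq Q b r * bp Q b r (n-r) * iQ (n-r) * iQ (n+r)))"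
  proof (intro sum.cong refl)
    fix r assume "r \<in> {..n}"
    then have r: "r \<le> n" by simp
    have s: "{j. j \<in> {..n} \<and> r \<le> j} = {r..n}" by auto
    show "(\<Sum>j\<in>{j. j \<in> {..n} \<and> r \<le> j}. \<alpha> r * (uq Q b j * iQ (n-j) * iQ (j-r) * iQ (j+r)))
        = \<alpha> r * (uq Q b r * bp Q b r (n-r) * iQ (n-r) * iQ (n+r))"
      unfolding s sum_distrib_left[symmetric] Vp[OF inv r] ..
  qed
  finally show ?thesis by (simp add: algebra_simps)
qed

lemma qbin_inv:
  fixes Q :: "'a::comm_ring_1"
  assumes inv: "\<And>k. qfac Q k * iQ k = 1" and mN: "m \<le> N"
  shows "qbin Q N m = qfac Q N * iQ m * iQ (N - m)"
proof -
  have "qbin Q N m = qbin Q N m * (qfac Q m * iQ m) * (qfac Q (N-m) * iQ (N-m))" using inv by simp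
  also have "\<dots> = (qbin Q N m * qfac Q m * qfac Q (N-m)) * iQ m * iQ (N-m)" by (simp add: algebra_simps)
  finally show ?thesis by (simp only: qbin_fac[OF mN, of Q])
qed

lemma qbin_sym:
  fixes Q :: "'a::comm_ring_1"
  assumes inv: "\<And>k. qfac Q k * iQ k = 1" and mN: "m \<le> N"
  shows "qbin Q N (N - m) = qbin Q N m"
  using qbin_inv[OF inv mN] qbin_inv[OF inv, of "N-m" N] mN by (simp add: algebra_simps)

lemma cq_sq: "cq Q r * cq Q r = Q^(r*(r-1))"
proof -
  have "cq Q r * cq Q r = ((-1)^r * (-1)^r) * (Q^tri r * Q^tri r)" by (simp add: cq_def algebra_simps)
  also have "(-1)^r * (-1)^r = (1::'a)" by (simp add: power_add[symmetric])
  also have "Q^tri r * Q^tri r = Q^(2 * tri r)" by (simp add: power_add[symmetric] mult_2)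
  finally show ?thesis by (simp add: two_tri)
qed

definition au :: "'a::comm_ring_1 \<Rightarrow> nat \<Rightarrow> 'a" where
  "au Q r = (if r = 0 then 1 else cq Q r * (1 + Q^r))"

lemma sum_split_center:
  "(\<Sum>m\<le>2*n. f m) = (\<Sum>r\<le>(n::nat). f (n + r)) + (\<Sum>r=1..n. (f (n - r) :: 'a::comm_monoid_add))"
proof -
  have "{..2*n} = {..<n} \<union> {n..n+n}" by auto
  then have "(\<Sum>m\<le>2*n. f m) = (\<Sum>m<n. f m) + (\<Sum>m=n..n+n. f m)"
    by (simp add: sum.union_disjoint ivl_disj_int)
  also have "(\<Sum>m=n..n+n. f m) = (\<Sum>r\<le>n. f (n + r))"
    using sum.shift_bounds_cl_nat_ivl[of f 0 n n] by (simp add: atLeast0AtMost add.commute)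
  also have "(\<Sum>m<n. f m) = (\<Sum>i<n. f (n - Suc i))"
    by (rule sum.nat_diff_reindex[symmetric])
  also have "\<dots> = (\<Sum>r=1..n. f (n - r))"
    by (simp add: sum.atLeast1_atMost_eq)
  finally show ?thesis by (simp add: add.commute)
qed

lemma unit_pair:
  fixes Q :: "'a::idom"
  assumes inv: "\<And>k. qfac Q k * iQ k = 1" and Q0: "Q \<noteq> 0"
  shows "(\<Sum>r\<le>n. au Q r * iQ (n-r) * iQ (n+r)) = (if n = 0 then 1 else 0)"
proof (cases "n = 0")
  case True then show ?thesis using inv[of 0] by (simp add: au_def)
next
  case False
  define K where "K = cq Q n * Q^(n*n)"
  define g where "g m = qbin Q (2*n) m * cq Q m * (1::'a)^m * (Q^n)^(2*n - m)" for m
  have Z: "(\<Sum>m\<le>2*n. g m) = 0"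
  proof -
    have "(\<Sum>m\<le>2*n. g m) = (\<Prod>i<2*n. Q^n - 1 * Q^i)" unfolding g_def by (rule qbinom)
    also have "\<dots> = 0" using False by (intro prod_zero bexI[of _ n]) auto
    finally show ?thesis .
  qed
  have G1: "g (n + r) = K * (cq Q r * qbin Q (2*n) (n+r))" if "r \<le> n" for r
  proof -
    obtain d where nd: "n = r + d" using \<open>r \<le> n\<close> le_Suc_ex by blast
    have "g (n + r) = qbin Q (2*n) (n+r) * (cq Q r * cq Q n * Q^(r*n)) * Q^(n*(2*n - (n+r)))"
      unfolding g_def cq_add[of Q n r] by (simp add: power_mult[symmetric])
    also have "\<dots> = qbin Q (2*n) (n+r) * cq Q r * cq Q n * Q^(r*n + n*(2*n - (n+r)))"
      by (simp add: power_add algebra_simps)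
    also have "r*n + n*(2*n - (n+r)) = n*n" using nd by (simp add: algebra_simps)
    finally show ?thesis by (simp add: K_def algebra_simps)
  qed
  have G2: "g (n - r) = K * (cq Q r * Q^r * qbin Q (2*n) (n+r))" if "1 \<le> r" "r \<le> n" for r
  proof -
    obtain d where nd: "n = r + d" using \<open>r \<le> n\<close> le_Suc_ex by blast
    obtain r' where rr: "r = Suc r'" using \<open>1 \<le> r\<close> by (cases r) auto
    have sym: "qbin Q (2*n) (n - r) = qbin Q (2*n) (n+r)"
      using qbin_sym[OF inv, of "n+r" "2*n"] \<open>r \<le> n\<close> by (simp add: nd)
    have "g (n - r) = qbin Q (2*n) (n+r) * cq Q d * Q^(n*(2*n - (n-r)))"
      unfolding g_def sym using nd by (simp add: power_mult[symmetric])
    also have "n*(2*n - (n-r)) = d*d + 3*d*r + 2*r*r" using nd by (simp add: algebra_simps)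
    finally have L: "g (n - r) = qbin Q (2*n) (n+r) * cq Q d * Q^(d*d + 3*d*r + 2*r*r)" .
    have "K * (cq Q r * Q^r * qbin Q (2*n) (n+r)) = (cq Q r * cq Q r) * cq Q d * Q^(r*d) * Q^(n*n) * Q^r * qbin Q (2*n) (n+r)"
      unfolding K_def nd cq_add[of Q r d] by (simp add: algebra_simps)
    also have "\<dots> = cq Q d * Q^(r*(r-1) + r*d + n*n + r) * qbin Q (2*n) (n+r)"
      unfolding cq_sq by (simp only: power_add mult_ac)
    also have "r*(r-1) + r*d + n*n + r = d*d + 3*d*r + 2*r*r" using nd rr by (simp add: algebra_simps)
    finally have R: "K * (cq Q r * Q^r * qbin Q (2*n) (n+r)) = cq Q d * Q^(d*d + 3*d*r + 2*r*r) * qbin Q (2*n) (n+r)" .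
    show ?thesis unfolding L R by (simp only: mult_ac)
  qed
  have "(\<Sum>m\<le>2*n. g m) = K * ((\<Sum>r\<le>n. cq Q r * qbin Q (2*n) (n+r)) + (\<Sum>r=1..n. cq Q r * Q^r * qbin Q (2*n) (n+r)))"
  proof -
    have A1: "(\<Sum>r\<le>n. g (n+r)) = (\<Sum>r\<le>n. K * (cq Q r * qbin Q (2*n) (n+r)))"
      by (rule sum.cong[OF refl]) (simp add: G1)
    have A2: "(\<Sum>r=1..n. g (n-r)) = (\<Sum>r=1..n. K * (cq Q r * Q^r * qbin Q (2*n) (n+r)))"
      by (rule sum.cong[OF refl]) (simp add: G2)
    show ?thesis unfolding sum_split_center[of g n] distrib_left sum_distrib_left A1 A2 ..
  qed
  also have "(\<Sum>r\<le>n. cq Q r * qbin Q (2*n) (n+r)) + (\<Sum>r=1..n. cq Q r * Q^r * qbin Q (2*n) (n+r))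
      = (\<Sum>r\<le>n. au Q r * qbin Q (2*n) (n+r))"
  proof -
    have s1: "(\<Sum>r\<le>n. cq Q r * qbin Q (2*n) (n+r)) = qbin Q (2*n) n + (\<Sum>r=1..n. cq Q r * qbin Q (2*n) (n+r))"
      by (simp add: atMost_atLeast0 sum.atLeast_Suc_atMost)
    have s2: "(\<Sum>r\<le>n. au Q r * qbin Q (2*n) (n+r)) = qbin Q (2*n) n + (\<Sum>r=1..n. au Q r * qbin Q (2*n) (n+r))"
      by (simp add: atMost_atLeast0 sum.atLeast_Suc_atMost au_def)
    have s3: "(\<Sum>r=1..n. au Q r * qbin Q (2*n) (n+r)) = (\<Sum>r=1..n. cq Q r * qbin Q (2*n) (n+r)) + (\<Sum>r=1..n. cq Q r * Q^r * qbin Q (2*n) (n+r))"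
      by (simp add: au_def sum.distrib[symmetric] algebra_simps)
    show ?thesis unfolding s1 s2 s3 by (simp add: algebra_simps)
  qed
  finally have KS: "K * (\<Sum>r\<le>n. au Q r * qbin Q (2*n) (n+r)) = 0" using Z by simp
  have K0: "K \<noteq> 0" using Q0 by (simp add: K_def cq_def)
  have S0: "(\<Sum>r\<le>n. au Q r * qbin Q (2*n) (n+r)) = 0" using KS K0 by simp
  have "(\<Sum>r\<le>n. au Q r * iQ (n-r) * iQ (n+r)) = (\<Sum>r\<le>n. au Q r * qbin Q (2*n) (n+r)) * iQ (2*n)"
    unfolding sum_distrib_right
  proof (intro sum.cong refl)
    fix r assume "r \<in> {..n}"
    then have "n + r \<le> 2*n" by simp
    from iQ_bin[OF inv this] have "iQ (n - r) * iQ (n+r) = qbin Q (2*n) (n+r) * iQ (2*n)"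
      by (simp add: mult_2)
    then show "au Q r * iQ (n-r) * iQ (n+r) = au Q r * qbin Q (2*n) (n+r) * iQ (2*n)"
      by (simp add: mult.assoc)
  qed
  then show ?thesis using S0 False by simp
qed

abbreviation XX :: "int fps" where "XX \<equiv> fps_X"
abbreviation QQ :: "int fps" where "QQ \<equiv> fps_X^2"

lemma gi_inv: assumes "0 < j" shows "(1 - fps_X^j) * inv_one_minus_Xpow j = (1 :: int fps)"
proof (rule fps_ext)
  fix m
  have "fps_nth ((1 - fps_X^j) * inv_one_minus_Xpow j) m
      = fps_nth (inv_one_minus_Xpow j) m - fps_nth (fps_X^j * inv_one_minus_Xpow j) m"
    by (simp add: algebra_simps)
  also have "\<dots> = fps_nth (1::int fps) m"
  proof (cases "m < j")
    case True
    then have "j dvd m \<longleftrightarrow> m = 0" using assms by (auto dest: dvd_imp_le)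
    then show ?thesis using True by (simp add: fps_X_power_mult_nth inv_one_minus_Xpow_def)
  next
    case False
    have "j dvd m \<longleftrightarrow> j dvd (m - j)" using False by (simp add: dvd_minus_self)
    then show ?thesis using False assms by (simp add: fps_X_power_mult_nth inv_one_minus_Xpow_def)
  qed
  finally show "fps_nth ((1 - fps_X^j) * inv_one_minus_Xpow j) m = fps_nth (1::int fps) m" .
qed

definition iQ :: "nat \<Rightarrow> int fps" where
  "iQ k = (\<Prod>i=1..k. inv_one_minus_Xpow (2*i))"
definition iq :: "nat \<Rightarrow> int fps" where
  "iq k = (\<Prod>i=1..k. inv_one_minus_Xpow (2*i - 1))"

lemma iQ_inv: "qfac QQ k * iQ k = 1"
proof -
  have "qfac QQ k * iQ k = (\<Prod>i=1..k. (1 - fps_X^(2*i)) * inv_one_minus_Xpow (2*i))"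
    by (simp add: qfac_def iQ_def prod.distrib power_mult)
  also have "\<dots> = 1" by (intro prod.neutral ballI gi_inv) auto
  finally show ?thesis .
qed

lemma iq_inv: "(\<Prod>i=1..k. 1 - fps_X^(2*i-1)) * iq k = (1 :: int fps)"
proof -
  have "(\<Prod>i=1..k. 1 - fps_X^(2*i-1)) * iq k = (\<Prod>i=1..k. (1 - fps_X^(2*i-1)) * inv_one_minus_Xpow (2*i-1))"
    by (simp add: iq_def prod.distrib)
  also have "\<dots> = (1 :: int fps)" by (intro prod.neutral ballI gi_inv) auto
  finally show ?thesis .
qed

lemma inv_qpoch_split: "inv_qpoch_q (2*j) = iQ j * iq j"
proof (induction j)
  case 0 then show ?case by (simp add: inv_qpoch_q_def iQ_def iq_def)
next
  case (Suc j)
  have "inv_qpoch_q (2 * Suc j) = inv_qpoch_q (2*j) * inv_one_minus_Xpow (Suc (2*j)) * inv_one_minus_Xpow (Suc (Suc (2*j)))"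
    by (simp add: inv_qpoch_q_def)
  then show ?case using Suc by (simp add: iQ_def iq_def algebra_simps)
qed

definition pm :: "nat \<Rightarrow> int fps" where "pm n = bp QQ (-QQ) 0 n"

lemma uq_Suc: "uq Q b (Suc r) = uq Q b r * (b - Q^Suc r) * (- (Q^r))"
  by (simp add: uq_def cq_Suc algebra_simps)

lemma uq_mQ: "uq Q (-Q) r = Q^(r + tri r) * (\<Prod>i<r. 1 + Q^i)"
proof (induction r)
  case 0 then show ?case by (simp add: uq_def)
next
  case (Suc r)
  have "uq Q (-Q) (Suc r) = uq Q (-Q) r * (Q^Suc r * (1 + Q^r))"
    unfolding uq_Suc by (simp add: algebra_simps)
  then show ?case unfolding Suc by (simp add: tri_Suc power_add algebra_simps)
qed

lemma P0_bp: "(\<Prod>i<a. 1 + Q^i) * (\<Prod>i<k. 1 + Q^(a+i)) = (\<Prod>i<a+k. 1 + (Q::'a::comm_ring_1)^i)"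
  by (induction k) (auto simp: algebra_simps)

lemma bp_mQ: "bp Q (-Q) r k = (\<Prod>i<k. 1 + Q^(Suc r + i))"
  by (simp add: bp_def algebra_simps)

lemma P0_Suc: "(\<Prod>i<Suc n. 1 + Q^i) = 2 * (\<Prod>i<n. 1 + (Q::'a::comm_ring_1)^(Suc i))"
  by (simp add: prod.lessThan_Suc_shift del: prod.lessThan_Suc)

lemma pm_eq: "pm n = (\<Prod>i<n. 1 + QQ^(Suc i))"
  by (simp add: pm_def bp_mQ)

lemma QQ_pow: "QQ^k = XX^(2*k)" by (simp add: power_mult)

lemma two_r_tri: "2 * (r + tri r) = r * (r + 1)"
  using two_tri[of r] by (cases r) (auto simp: algebra_simps)

definition aB :: "nat \<Rightarrow> int fps" where
  "aB r = (if r = 0 then 1 else XX^(2*r*r - r) * (1 + XX^(2*r)))"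
definition a3 :: "nat \<Rightarrow> int fps" where
  "a3 r = (if r = 0 then 1 else 2 * XX^(3*r*r))"
definition a2 :: "nat \<Rightarrow> int fps" where
  "a2 r = (if r = 0 then 1 else 2 * (-1)^r * XX^(2*r*r))"

lemma QQ_ne: "QQ \<noteq> 0" by simp

lemma unitpair_fps: "j \<le> n \<Longrightarrow> (\<lambda>j. if j = 0 then 1 else 0 :: int fps) j = (\<Sum>r\<le>j. au QQ r * iQ (j-r) * iQ (j+r))"
  using unit_pair[of QQ iQ j, OF iQ_inv QQ_ne] by simp

lemma k1: assumes "r \<le> n" shows "bp QQ XX r (n-r) * iq n = iq r"
proof -
  have s: "iq n = iq r * (\<Prod>i=Suc r..n. inv_one_minus_Xpow (2*i - 1))"
    unfolding iq_def by (rule prod_split1[OF assms])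
  have "(\<Prod>i=Suc r..n. inv_one_minus_Xpow (2*i - 1)) = (\<Prod>i=Suc r..<Suc n. inv_one_minus_Xpow (2*i - 1))"
    by (simp add: atLeastLessThanSuc_atLeastAtMost)
  also have "\<dots> = (\<Prod>i=0+Suc r..<(n-r)+Suc r. inv_one_minus_Xpow (2*i - 1))" using assms by simp
  also have "\<dots> = (\<Prod>i<n-r. inv_one_minus_Xpow (2*(r+i) + 1))"
    by (subst prod.shift_bounds_nat_ivl) (simp add: atLeast0LessThan algebra_simps)
  finally have t: "(\<Prod>i=Suc r..n. inv_one_minus_Xpow (2*i - 1)) = (\<Prod>i<n-r. inv_one_minus_Xpow (2*(r+i) + 1))" .
  have b: "bp QQ XX r (n-r) = (\<Prod>i<n-r. 1 - XX^(2*(r+i) + 1))"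
    unfolding bp_def by (intro prod.cong refl) (simp add: power_mult[symmetric] algebra_simps)
  have "bp QQ XX r (n-r) * (\<Prod>i<n-r. inv_one_minus_Xpow (2*(r+i) + 1)) = (\<Prod>i<n-r. (1 - XX^(2*(r+i) + 1)) * inv_one_minus_Xpow (2*(r+i) + 1))"
    unfolding b by (simp add: prod.distrib)
  also have "\<dots> = 1" by (intro prod.neutral ballI gi_inv) auto
  finally show ?thesis unfolding s t by (simp add: algebra_simps)
qed

lemma k2: "uq QQ XX r * iq r = (-1)^r * XX^(r*r)"
proof -
  have p: "(\<Prod>i=1..r. XX - QQ^i) = XX^r * (\<Prod>i=1..r. 1 - XX^(2*i-1))"
  proof -
    have "(\<Prod>i=1..r. XX - QQ^i) = (\<Prod>i=1..r. XX * (1 - XX^(2*i-1)))"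
    proof (intro prod.cong refl)
      fix i assume "i \<in> {1..r}"
      then have "2*i = Suc (2*i - 1)" by auto
      then have "QQ^i = XX * XX^(2*i-1)" by (metis QQ_pow power_Suc)
      then show "XX - QQ^i = XX * (1 - XX^(2*i-1))" by (simp add: algebra_simps)
    qed
    also have "\<dots> = XX^r * (\<Prod>i=1..r. 1 - XX^(2*i-1))" by (simp add: prod.distrib)
    finally show ?thesis .
  qed
  have "uq QQ XX r * iq r = XX^r * cq QQ r * ((\<Prod>i=1..r. 1 - XX^(2*i-1)) * iq r)"
    unfolding uq_def p by (simp add: algebra_simps)
  also have "\<dots> = XX^r * cq QQ r" using iq_inv[of r] by simp
  also have "\<dots> = (-1)^r * XX^(r + 2 * tri r)" by (simp add: cq_def QQ_pow power_add algebra_simps)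
  also have "r + 2 * tri r = r * r" using two_tri[of r] by (cases r) auto
  finally show ?thesis .
qed

lemma au_pos: "0 < r \<Longrightarrow> au QQ r = (-1)^r * XX^(2 * tri r) * (1 + XX^(2*r))"
  by (simp add: au_def cq_def QQ_pow)

lemma pairB: "iQ n * iq n = (\<Sum>r\<le>n. aB r * iQ (n-r) * iQ (n+r))"
proof -
  have B: "(\<Sum>j\<le>n. uq QQ XX j * (\<lambda>j. if j = 0 then 1 else 0 :: int fps) j * iQ (n-j))
       = (\<Sum>r\<le>n. uq QQ XX r * au QQ r * bp QQ XX r (n-r) * iQ (n-r) * iQ (n+r))"
    by (rule bailey[OF iQ_inv unitpair_fps])
  have L: "(\<Sum>j\<le>n. uq QQ XX j * (\<lambda>j. if j = 0 then 1 else 0 :: int fps) j * iQ (n-j)) = iQ n"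
    by (simp add: uq_def sum.atMost_shift)
  have "iQ n = (\<Sum>r\<le>n. uq QQ XX r * au QQ r * bp QQ XX r (n-r) * iQ (n-r) * iQ (n+r))"
    using B L by simp
  then have "iQ n * iq n = (\<Sum>r\<le>n. (uq QQ XX r * au QQ r * bp QQ XX r (n-r) * iQ (n-r) * iQ (n+r)) * iq n)"
    by (simp add: sum_distrib_right)
  also have "\<dots> = (\<Sum>r\<le>n. (uq QQ XX r * au QQ r * (bp QQ XX r (n-r) * iq n)) * iQ (n-r) * iQ (n+r))"
    by (intro sum.cong refl) (simp only: mult_ac)
  also have "\<dots> = (\<Sum>r\<le>n. aB r * iQ (n-r) * iQ (n+r))"
  proof (intro sum.cong refl)
    fix r assume "r \<in> {..n}"
    then have rn: "r \<le> n" by simp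
    have "uq QQ XX r * au QQ r * (bp QQ XX r (n-r) * iq n) = (uq QQ XX r * iq r) * au QQ r"
      unfolding k1[OF rn] by (simp add: algebra_simps)
    also have "\<dots> = aB r"
    proof (cases "r = 0")
      case True then show ?thesis by (simp add: k2 aB_def au_def)
    next
      case False
      have e: "r * r + 2 * tri r = 2*r*r - r" using two_tri[of r] False by (cases r) (auto simp: algebra_simps)
      have "(uq QQ XX r * iq r) * au QQ r = ((-1)^r * (-1)^r) * XX^(r * r + 2 * tri r) * (1 + XX^(2*r))"
        unfolding k2 au_pos[OF \<open>r \<noteq> 0\<close>[unfolded neq0_conv]] by (simp add: power_add algebra_simps)
      also have "(-1)^r * (-1)^r = (1::int fps)" by (simp add: power_add[symmetric])
      finally show ?thesis using False by (simp add: aB_def e)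
    qed
    finally show "(uq QQ XX r * au QQ r * (bp QQ XX r (n-r) * iq n)) * iQ (n-r) * iQ (n+r) = aB r * iQ (n-r) * iQ (n+r)"
      by simp
  qed
  finally show ?thesis .
qed

lemma uq_mQQ: "uq QQ (-QQ) r = XX^(r*(r+1)) * (\<Prod>i<r. 1 + QQ^i)"
  unfolding uq_mQ QQ_pow two_r_tri ..

lemma sterm_eq: "s_term j = uq QQ (-QQ) j * (iQ j * iq j)"
  unfolding s_term_def uq_mQQ qpoch_def inv_qpoch_split by (simp add: algebra_simps)

lemma P0_n: "r \<le> n \<Longrightarrow> (\<Prod>i<Suc r. 1 + QQ^i) * bp QQ (-QQ) r (n-r) = 2 * pm n"
proof -
  assume rn: "r \<le> n"
  have "(\<Prod>i<Suc r. 1 + QQ^i) * bp QQ (-QQ) r (n-r) = (\<Prod>i<Suc r + (n-r). 1 + QQ^i)"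
    unfolding bp_mQ by (rule P0_bp)
  also have "Suc r + (n-r) = Suc n" using rn by simp
  finally show ?thesis by (simp only: P0_Suc pm_eq)
qed

lemma k4: assumes "r \<le> n" shows "uq QQ (-QQ) r * aB r * bp QQ (-QQ) r (n-r) = pm n * a3 r"
proof (cases "r = 0")
  case True then show ?thesis by (simp add: uq_def aB_def a3_def pm_def)
next
  case False
  have e: "r*(r+1) + (2*r*r - r) = 3*r*r" using False by (cases r) (auto simp: algebra_simps)
  have "uq QQ (-QQ) r * aB r * bp QQ (-QQ) r (n-r) = (XX^(r*(r+1)) * XX^(2*r*r - r)) * ((\<Prod>i<r. 1 + QQ^i) * (1 + XX^(2*r)) * bp QQ (-QQ) r (n-r))"
    unfolding uq_mQQ aB_def using False by (simp only: if_False mult_ac)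
  also have "XX^(r*(r+1)) * XX^(2*r*r - r) = XX^(r*(r+1) + (2*r*r - r))" by (simp only: power_add)
  also have "(\<Prod>i<r. 1 + QQ^i) * (1 + XX^(2*r)) = (\<Prod>i<Suc r. 1 + QQ^i)" by (simp add: QQ_pow)
  finally show ?thesis unfolding e P0_n[OF assms] using False by (simp add: a3_def algebra_simps)
qed

lemma k5: assumes "r \<le> n" shows "uq QQ (-QQ) r * au QQ r * bp QQ (-QQ) r (n-r) = pm n * a2 r"
proof (cases "r = 0")
  case True then show ?thesis by (simp add: uq_def au_def a2_def pm_def)
next
  case False
  have e: "r*(r+1) + 2 * tri r = 2*r*r" using two_tri[of r] False by (cases r) (auto simp: algebra_simps)
  have "uq QQ (-QQ) r * au QQ r * bp QQ (-QQ) r (n-r) = (-1)^r * (XX^(r*(r+1)) * XX^(2 * tri r)) * ((\<Prod>i<r. 1 + QQ^i) * (1 + XX^(2*r)) * bp QQ (-QQ) r (n-r))"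
    unfolding uq_mQQ au_pos[OF \<open>r \<noteq> 0\<close>[unfolded neq0_conv]] by (simp only: mult_ac)
  also have "XX^(r*(r+1)) * XX^(2 * tri r) = XX^(r*(r+1) + 2 * tri r)" by (simp only: power_add)
  also have "(\<Prod>i<r. 1 + QQ^i) * (1 + XX^(2*r)) = (\<Prod>i<Suc r. 1 + QQ^i)" by (simp add: QQ_pow)
  finally show ?thesis unfolding e P0_n[OF assms] using False by (simp add: a2_def algebra_simps)
qed

lemma E1: "(\<Sum>j\<le>n. s_term j * iQ (n-j)) = pm n * (\<Sum>r\<le>n. a3 r * iQ (n-r) * iQ (n+r))"
proof -
  have "(\<Sum>j\<le>n. uq QQ (-QQ) j * (\<lambda>j. iQ j * iq j) j * iQ (n-j))
       = (\<Sum>r\<le>n. uq QQ (-QQ) r * aB r * bp QQ (-QQ) r (n-r) * iQ (n-r) * iQ (n+r))"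
    by (rule bailey[OF iQ_inv]) (simp add: pairB)
  also have "\<dots> = (\<Sum>r\<le>n. pm n * (a3 r * iQ (n-r) * iQ (n+r)))"
  proof (intro sum.cong refl)
    fix r assume "r \<in> {..n}"
    then have rn: "r \<le> n" by simp
    show "uq QQ (-QQ) r * aB r * bp QQ (-QQ) r (n-r) * iQ (n-r) * iQ (n+r) = pm n * (a3 r * iQ (n-r) * iQ (n+r))"
      by (simp only: mult.assoc[symmetric] k4[OF rn])
  qed
  finally show ?thesis by (simp add: sterm_eq sum_distrib_left mult.assoc)
qed

lemma E2: "iQ n = pm n * (\<Sum>r\<le>n. a2 r * iQ (n-r) * iQ (n+r))"
proof -
  have "(\<Sum>j\<le>n. uq QQ (-QQ) j * (\<lambda>j. if j = 0 then 1 else 0 :: int fps) j * iQ (n-j))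
       = (\<Sum>r\<le>n. uq QQ (-QQ) r * au QQ r * bp QQ (-QQ) r (n-r) * iQ (n-r) * iQ (n+r))"
    by (rule bailey[OF iQ_inv unitpair_fps])
  also have "\<dots> = (\<Sum>r\<le>n. pm n * (a2 r * iQ (n-r) * iQ (n+r)))"
  proof (intro sum.cong refl)
    fix r assume "r \<in> {..n}"
    then have rn: "r \<le> n" by simp
    show "uq QQ (-QQ) r * au QQ r * bp QQ (-QQ) r (n-r) * iQ (n-r) * iQ (n+r) = pm n * (a2 r * iQ (n-r) * iQ (n+r))"
      by (simp only: mult.assoc[symmetric] k5[OF rn])
  qed
  also have "(\<Sum>j\<le>n. uq QQ (-QQ) j * (\<lambda>j. if j = 0 then 1 else 0 :: int fps) j * iQ (n-j)) = iQ n"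
    by (simp add: uq_def sum.atMost_shift)
  finally show ?thesis by (simp add: sum_distrib_left)
qed

definition lowzero :: "nat \<Rightarrow> 'a::comm_ring_1 fps \<Rightarrow> bool" where
  "lowzero m f \<longleftrightarrow> (\<forall>i<m. fps_nth f i = 0)"

lemma lz_mono: "lowzero a f \<Longrightarrow> b \<le> a \<Longrightarrow> lowzero b f"
  by (auto simp: lowzero_def)

lemma lz_0[simp]: "lowzero 0 f" by (simp add: lowzero_def)

lemma lz_mult: assumes "lowzero a f" "lowzero b g" shows "lowzero (a+b) (f*g)"
  unfolding lowzero_def
proof (intro allI impI)
  fix k assume k: "k < a + b"
  have "fps_nth (f*g) k = (\<Sum>i=0..k. fps_nth f i * fps_nth g (k - i))" by (rule fps_mult_nth)
  also have "\<dots> = 0"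
  proof (intro sum.neutral ballI)
    fix i assume ik: "i \<in> {0..k}"
    show "fps_nth f i * fps_nth g (k - i) = 0"
    proof (cases "i < a")
      case True then show ?thesis using assms(1) by (simp add: lowzero_def)
    next
      case False then have "k - i < b" using k ik by auto
      then show ?thesis using assms(2) by (simp add: lowzero_def)
    qed
  qed
  finally show "fps_nth (f*g) k = 0" .
qed

lemma lz_mult_left: "lowzero b g \<Longrightarrow> lowzero b (f*g)"
  using lz_mult[of 0 f b g] by simp
lemma lz_mult_right: "lowzero a f \<Longrightarrow> lowzero a (f*g)"
  using lz_mult[of a f 0 g] by simp

lemma lz_add: "lowzero m f \<Longrightarrow> lowzero m g \<Longrightarrow> lowzero m (f + g)"
  by (simp add: lowzero_def)

lemma lz_sum: "(\<And>x. x \<in> S \<Longrightarrow> lowzero m (f x)) \<Longrightarrow> lowzero m (sum f S)"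
  by (simp add: lowzero_def fps_sum_nth)

lemma lz_prod1:
  assumes "finite S" "\<And>i. i \<in> S \<Longrightarrow> lowzero m (f i - 1)"
  shows "lowzero m (prod f S - 1)"
  using assms
proof (induction S rule: finite_induct)
  case empty then show ?case by (simp add: lowzero_def)
next
  case (insert x S)
  have eq: "prod f (insert x S) - 1 = (f x - 1) * prod f S + (prod f S - 1)"
    using insert by (simp add: algebra_simps)
  have 1: "lowzero m ((f x - 1) * prod f S)" by (rule lz_mult_right) (use insert in auto)
  have 2: "lowzero m (prod f S - 1)" using insert by auto
  show ?case unfolding eq using 1 2 by (rule lz_add)
qed

lemma lz_mult1: "lowzero m (f - 1) \<Longrightarrow> lowzero m (g - 1) \<Longrightarrow> lowzero m (f * g - 1)"
proof -
  assume a: "lowzero m (f - 1)" "lowzero m (g - 1)"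
  have eq: "f * g - 1 = (f - 1) * g + (g - 1)" by (simp add: algebra_simps)
  have 1: "lowzero m ((f - 1) * g)" using a(1) by (rule lz_mult_right)
  show ?thesis unfolding eq using 1 a(2) by (rule lz_add)
qed

lemma lz_Xpow: "lowzero k (fps_X^k * (f::int fps))"
  by (simp add: lowzero_def fps_X_power_mult_nth)

definition GG :: "nat \<Rightarrow> nat \<Rightarrow> int fps" where "GG n k = qfac QQ n * iQ k"

lemma GG_le: assumes "k \<le> n" shows "lowzero (Suc k) (GG n k - 1)"
proof -
  have "iQ k = (\<Prod>i=Suc k..n. 1 - QQ^i) * iQ n" by (rule iQ_split[OF iQ_inv assms])
  then have "GG n k = (\<Prod>i=Suc k..n. 1 - QQ^i) * (qfac QQ n * iQ n)" by (simp add: GG_def algebra_simps)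
  then have g: "GG n k = (\<Prod>i=Suc k..n. 1 - QQ^i)" using iQ_inv by simp
  show ?thesis unfolding g
  proof (rule lz_prod1)
    fix i assume "i \<in> {Suc k..n}"
    then have "Suc k \<le> 2*i" by auto
    moreover have "lowzero (2*i) ((1 - QQ^i) - 1)"
      using lz_Xpow[of "2*i" "-1"] by (simp add: QQ_pow)
    ultimately show "lowzero (Suc k) ((1 - QQ^i) - 1)" by (rule lz_mono[rotated])
  qed simp
qed

lemma gi_lz: "0 < j \<Longrightarrow> lowzero j (inv_one_minus_Xpow j - 1)"
  by (auto simp: lowzero_def inv_one_minus_Xpow_def dest: dvd_imp_le)

lemma GG_ge: assumes "n \<le> k" shows "lowzero (Suc n) (GG n k - 1)"
proof -
  have "iQ k = iQ n * (\<Prod>i=Suc n..k. inv_one_minus_Xpow (2*i))"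
    unfolding iQ_def by (rule prod_split1[OF assms])
  then have g: "GG n k = (\<Prod>i=Suc n..k. inv_one_minus_Xpow (2*i))"
    using iQ_inv[of n] by (simp add: GG_def mult.assoc[symmetric])
  show ?thesis unfolding g
  proof (rule lz_prod1)
    fix i assume "i \<in> {Suc n..k}"
    then have "Suc n \<le> 2*i" "0 < 2*i" by auto
    then show "lowzero (Suc n) (inv_one_minus_Xpow (2*i) - 1)"
      using gi_lz lz_mono by blast
  qed simp
qed

lemma lim_coeff:
  assumes w: "\<And>r. lowzero r (w r)" and g: "\<And>r. r \<le> n \<Longrightarrow> lowzero (Suc n - r) (g r - 1)"
    and kn: "k \<le> n"
  shows "fps_nth (\<Sum>r\<le>n. w r * g r) k = (\<Sum>r\<le>k. fps_nth (w r) k)"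
proof -
  have "(\<Sum>r\<le>n. w r * g r) = (\<Sum>r\<le>n. w r) + (\<Sum>r\<le>n. w r * (g r - 1))"
    by (simp add: sum.distrib[symmetric] algebra_simps)
  moreover have "lowzero (Suc n) (\<Sum>r\<le>n. w r * (g r - 1))"
  proof (rule lz_sum)
    fix r assume "r \<in> {..n}"
    then have "lowzero (r + (Suc n - r)) (w r * (g r - 1))" using w g by (intro lz_mult) auto
    then show "lowzero (Suc n) (w r * (g r - 1))" using \<open>r \<in> {..n}\<close> by simp
  qed
  ultimately have "fps_nth (\<Sum>r\<le>n. w r * g r) k = (\<Sum>r\<le>n. fps_nth (w r) k)"
    using kn by (simp add: lowzero_def fps_sum_nth)
  also have "\<dots> = (\<Sum>r\<le>k. fps_nth (w r) k)"
  proof (rule sum.mono_neutral_right)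
    show "\<forall>r\<in>{..n} - {..k}. fps_nth (w r) k = 0" using w by (auto simp: lowzero_def)
  qed (use kn in auto)
  finally show ?thesis .
qed

definition Th3 :: "int fps" where "Th3 = Abs_fps (\<lambda>k. \<Sum>r\<le>k. fps_nth (a3 r) k)"
definition Ph :: "int fps" where "Ph = Abs_fps (\<lambda>k. \<Sum>r\<le>k. fps_nth (a2 r) k)"

definition AA where "AA n = (\<Sum>j\<le>n. s_term j * GG n (n-j))"
definition BB where "BB n = (\<Sum>r\<le>n. a3 r * (GG n (n-r) * GG n (n+r)))"
definition CC where "CC n = (\<Sum>r\<le>n. a2 r * (GG n (n-r) * GG n (n+r)))"

lemma ABC: "AA n * CC n = BB n"
proof -
  have qA: "qfac QQ n * AA n = pm n * BB n"
  proof -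
    have "qfac QQ n * AA n = qfac QQ n * qfac QQ n * (\<Sum>j\<le>n. s_term j * iQ (n-j))"
      by (simp add: AA_def GG_def sum_distrib_left algebra_simps)
    also have "\<dots> = pm n * BB n" unfolding E1
      by (simp add: BB_def GG_def sum_distrib_left algebra_simps)
    finally show ?thesis .
  qed
  have qC: "qfac QQ n = pm n * CC n"
  proof -
    have "qfac QQ n = qfac QQ n * qfac QQ n * iQ n" using iQ_inv[of n] by (simp add: algebra_simps)
    also have "\<dots> = pm n * CC n" unfolding E2[of n]
      by (simp add: CC_def GG_def sum_distrib_left algebra_simps)
    finally show ?thesis .
  qed
  have "qfac QQ n * (AA n * CC n) = qfac QQ n * BB n"
    using qA qC by (metis mult.assoc mult.commute)
  moreover have "qfac QQ n \<noteq> 0"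
  proof
    assume "qfac QQ n = 0"
    then have "fps_nth (qfac QQ n * iQ n) 0 = 0" by simp
    then show False using iQ_inv[of n] by simp
  qed
  ultimately show ?thesis by simp
qed

lemma sterm_lz: "lowzero j (s_term j)"
proof -
  have "s_term j = fps_X^j * (fps_X^(j*j) * qpoch (-1) (fps_X ^ 2) j * inv_qpoch_q (2 * j))"
    by (simp add: s_term_def power_add[symmetric] algebra_simps)
  then show ?thesis using lz_Xpow by simp
qed

lemma a3_lz: "lowzero r (a3 r)"
proof (cases "r = 0")
  case False
  have "r \<le> r*r" by (rule le_square)
  then have "r \<le> 3*r*r" by linarith
  then have e: "r + (3*r*r - r) = 3*r*r" by simp
  have p: "fps_X^r * fps_X^(3*r*r - r) = (fps_X^(3*r*r) :: int fps)"
    by (simp only: power_add[symmetric] e)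
  have "a3 r = 2 * fps_X^(3*r*r)" using False by (simp add: a3_def)
  also have "\<dots> = fps_X^r * (2 * fps_X^(3*r*r - r))" unfolding p[symmetric] by (simp only: mult_ac)
  finally have "a3 r = fps_X^r * (2 * fps_X^(3*r*r - r))" .
  then show ?thesis using lz_Xpow by simp
qed simp

lemma a2_lz: "lowzero r (a2 r)"
proof (cases "r = 0")
  case False
  have "r \<le> r*r" by (rule le_square)
  then have "r \<le> 2*r*r" by linarith
  then have e: "r + (2*r*r - r) = 2*r*r" by simp
  have p: "fps_X^r * fps_X^(2*r*r - r) = (fps_X^(2*r*r) :: int fps)"
    by (simp only: power_add[symmetric] e)
  have "a2 r = 2 * (-1)^r * fps_X^(2*r*r)" using False by (simp add: a2_def)
  also have "\<dots> = fps_X^r * (2 * (-1)^r * fps_X^(2*r*r - r))" unfolding p[symmetric] by (simp only: mult_ac)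
  finally have "a2 r = fps_X^r * (2 * (-1)^r * fps_X^(2*r*r - r))" .
  then show ?thesis using lz_Xpow by simp
qed simp

lemma GG2: "r \<le> n \<Longrightarrow> lowzero (Suc n - r) (GG n (n-r) * GG n (n+r) - 1)"
proof -
  assume rn: "r \<le> n"
  have 1: "lowzero (Suc n - r) (GG n (n-r) - 1)" using GG_le[of "n-r" n] rn by (simp add: Suc_diff_le)
  have "lowzero (Suc n) (GG n (n+r) - 1)" using GG_ge[of n "n+r"] by simp
  then have 2: "lowzero (Suc n - r) (GG n (n+r) - 1)" by (rule lz_mono) simp
  show ?thesis using 1 2 by (rule lz_mult1)
qed

lemma AA_nth: "k \<le> n \<Longrightarrow> fps_nth (AA n) k = s k"
proof -
  assume kn: "k \<le> n"
  have "fps_nth (AA n) k = (\<Sum>r\<le>k. fps_nth (s_term r) k)"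
    unfolding AA_def
    by (rule lim_coeff[OF sterm_lz _ kn]) (use GG_le in \<open>simp add: Suc_diff_le\<close>)
  then show ?thesis by (simp add: s_def)
qed

lemma BB_nth: "k \<le> n \<Longrightarrow> fps_nth (BB n) k = fps_nth Th3 k"
  unfolding BB_def Th3_def by (simp add: lim_coeff[OF a3_lz GG2])

lemma CC_nth: "k \<le> n \<Longrightarrow> fps_nth (CC n) k = fps_nth Ph k"
  unfolding CC_def Ph_def by (simp add: lim_coeff[OF a2_lz GG2])

theorem main_identity: "Abs_fps s * Ph = Th3"
proof (rule fps_ext)
  fix k
  have "fps_nth (Abs_fps s * Ph) k = (\<Sum>i=0..k. s i * fps_nth Ph (k - i))" by (simp add: fps_mult_nth)
  also have "\<dots> = (\<Sum>i=0..k. fps_nth (AA k) i * fps_nth (CC k) (k - i))"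
    by (intro sum.cong refl) (simp add: AA_nth CC_nth)
  also have "\<dots> = fps_nth (AA k * CC k) k" by (simp add: fps_mult_nth)
  also have "\<dots> = fps_nth Th3 k" by (simp add: ABC BB_nth)
  finally show "fps_nth (Abs_fps s * Ph) k = fps_nth Th3 k" .
qed

lemma lt24: "(m::nat) < 24 \<Longrightarrow> m \<in> {0,1,2,3,4,5,6,7,8,9,10,11,12,13,14,15,16,17,18,19,20,21,22,23}"
  by (simp add: less_Suc_eq numeral_eq_Suc)
lemma sq24m: "(m::nat) < 24 \<Longrightarrow> (m*m) mod 24 \<in> {0,1,4,9,12,16}"
  using lt24[of m] by auto
lemma sq24: "(a*a) mod 24 \<in> {0,1,4,9,12,16::nat}"
proof -
  have "(a*a) mod 24 = ((a mod 24)*(a mod 24)) mod 24" by (simp add: mod_mult_eq)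
  then show ?thesis using sq24m[of "a mod 24"] by simp
qed
lemma modlin: "(c*x + d*y) mod 24 = (c*(x mod 24) + d*(y mod 24)) mod (24::nat)"
proof -
  have "(c*x + d*y) mod 24 = ((c*x) mod 24 + (d*y) mod 24) mod 24" by (rule mod_add_eq[symmetric])
  also have "(c*x) mod 24 = (c*(x mod 24)) mod 24" by (rule mod_mult_right_eq[symmetric])
  also have "(d*y) mod 24 = (d*(y mod 24)) mod 24" by (rule mod_mult_right_eq[symmetric])
  also have "((c*(x mod 24)) mod 24 + (d*(y mod 24)) mod 24) mod 24 = (c*(x mod 24) + d*(y mod 24)) mod 24"
    by (rule mod_add_eq)
  finally show ?thesis .
qed
lemma t1: "(x::nat) \<in> {0,1,4,9,12,16} \<Longrightarrow> (3*x) mod 24 \<in> {0,3,12}"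
  by (elim insertE emptyE; simp)
lemma t2: "(x::nat) \<in> {0,1,4,9,12,16} \<Longrightarrow> y \<in> {0,1,4,9,12,16::nat} \<Longrightarrow> (3*x + 2*y) mod 24 \<notin> {1,13,17,23::nat}"
  by (elim insertE emptyE; simp)
lemma t3: "(x::nat) \<in> {0,1,4,9,12,16} \<Longrightarrow> y \<in> {0,1,4,9,12,16::nat} \<Longrightarrow> (3*x + 4*y) mod 24 \<notin> {1,13::nat}"
  by (elim insertE emptyE; simp)
lemma nt1: "(3*(a*a)) mod 24 \<in> {0,3,12::nat}"
proof -
  have "(3*(a*a)) mod 24 = (3*((a*a) mod 24)) mod 24" by (rule mod_mult_right_eq[symmetric])
  then show ?thesis using t1[OF sq24[of a]] by simp
qed
lemma nt2: "(3*(a*a) + 2*(b*b)) mod 24 \<notin> {1,13,17,23::nat}"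
  unfolding modlin[of 3 "a*a" 2 "b*b"] by (rule t2[OF sq24 sq24])
lemma nt3: "(3*(a*a) + 4*(b*b)) mod 24 \<notin> {1,13::nat}"
  unfolding modlin[of 3 "a*a" 4 "b*b"] by (rule t3[OF sq24 sq24])

lemma num_nth: "fps_nth (numeral c * f) k = numeral c * fps_nth (f::int fps) k"
  by (simp only: numeral_fps_const fps_mult_left_const_nth)

lemma c2m: "fps_const (2 * (-1)^r) = (2::int fps) * (-1)^r"
  unfolding fps_const_mult[symmetric] fps_const_power[symmetric] fps_const_neg[symmetric] fps_const_1_eq_1 numeral_fps_const ..

lemma a2_nth: "fps_nth (a2 r) k = (if r = 0 then (if k = 0 then 1 else 0) else (if k = 2*r*r then 2*(-1)^r else 0))"
proof (cases "r = 0")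
  case False
  have "a2 r = fps_const (2 * (-1)^r) * fps_X^(2*r*r)"
    using False unfolding c2m by (simp add: a2_def)
  then show ?thesis using False by (simp only: fps_mult_left_const_nth fps_X_power_nth) simp
qed (simp add: a2_def)

lemma a3_nth: "fps_nth (a3 r) k = (if r = 0 then (if k = 0 then 1 else 0) else (if k = 3*r*r then 2 else 0))"
proof (cases "r = 0")
  case False
  have "a3 r = fps_const 2 * fps_X^(3*r*r)"
    using False by (simp add: a3_def numeral_fps_const)
  then show ?thesis using False by (simp only: fps_mult_left_const_nth fps_X_power_nth) simp
qed (simp add: a3_def)

definition T2 :: "int fps" where "T2 = Abs_fps (\<lambda>k. \<Sum>r=1..k. if k = 2*r*r then (-1)^r else 0)"
definition U3 :: "int fps" where "U3 = Abs_fps (\<lambda>k. \<Sum>r=1..k. if k = 3*r*r then 1 else 0)"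

lemma sum_split0: "(\<Sum>r\<le>(k::nat). f r) = f 0 + (\<Sum>r=1..k. (f r :: int))"
proof -
  have "(\<Sum>r\<le>k. f r) = f 0 + (\<Sum>i<k. f (Suc i))" by (rule sum.atMost_shift)
  moreover have "(\<Sum>r=Suc 0..k. f r) = (\<Sum>i<k. f (Suc i))" by (rule sum.atLeast1_atMost_eq)
  ultimately show ?thesis by simp
qed

lemma Ph_eq: "Ph = 1 + 2 * T2"
proof (rule fps_ext)
  fix k
  have "fps_nth Ph k = (if k = 0 then 1 else 0) + (\<Sum>r=1..k. if k = 2*r*r then 2*(-1)^r else 0)"
    unfolding Ph_def fps_nth_Abs_fps sum_split0 by (simp add: a2_nth)
  also have "\<dots> = fps_nth (1 + 2 * T2) k"
    unfolding fps_add_nth num_nth T2_def fps_nth_Abs_fps sum_distrib_left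
    by (simp add: if_distrib cong: if_cong)
  finally show "fps_nth Ph k = fps_nth (1 + 2 * T2) k" .
qed

lemma Th3_eq: "Th3 = 1 + 2 * U3"
proof (rule fps_ext)
  fix k
  have "fps_nth Th3 k = (if k = 0 then 1 else 0) + (\<Sum>r=1..k. if k = 3*r*r then 2 else 0)"
    unfolding Th3_def fps_nth_Abs_fps sum_split0 by (simp add: a3_nth)
  also have "\<dots> = fps_nth (1 + 2 * U3) k"
    unfolding fps_add_nth num_nth U3_def fps_nth_Abs_fps sum_distrib_left
    by (simp add: if_distrib cong: if_cong)
  finally show "fps_nth Th3 k = fps_nth (1 + 2 * U3) k" .
qed

definition supp :: "int fps \<Rightarrow> nat set \<Rightarrow> bool" where
  "supp f A \<longleftrightarrow> (\<forall>k. fps_nth f k \<noteq> 0 \<longrightarrow> k \<in> A)"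

lemma supp_zero: "supp f A \<Longrightarrow> k \<notin> A \<Longrightarrow> fps_nth f k = 0"
  by (auto simp: supp_def)

lemma supp_mono: "supp f A \<Longrightarrow> A \<subseteq> B \<Longrightarrow> supp f B"
  by (auto simp: supp_def)

lemma supp_mult: assumes "supp f A" "supp g B" shows "supp (f*g) {a + b | a b. a \<in> A \<and> b \<in> B}"
  unfolding supp_def
proof (intro allI impI)
  fix k assume "fps_nth (f*g) k \<noteq> 0"
  then have "(\<Sum>i=0..k. fps_nth f i * fps_nth g (k - i)) \<noteq> 0" by (simp add: fps_mult_nth)
  then obtain i where i: "i \<in> {0..k}" "fps_nth f i * fps_nth g (k - i) \<noteq> 0"
    by (meson sum.neutral)
  then have "i \<in> A" "k - i \<in> B" using assms by (auto simp: supp_def)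
  moreover have "k = i + (k - i)" using i by simp
  ultimately show "k \<in> {a + b | a b. a \<in> A \<and> b \<in> B}" by blast
qed

lemma supp_sum_nz: assumes "(\<Sum>r\<in>S. (if P r then c r else 0 :: int)) \<noteq> 0" shows "\<exists>r\<in>S. P r"
proof (rule ccontr)
  assume "\<not> (\<exists>r\<in>S. P r)"
  then have "(\<Sum>r\<in>S. (if P r then c r else 0 :: int)) = 0" by (intro sum.neutral) auto
  then show False using assms by simp
qed

lemma T2_supp: "supp T2 {k. \<exists>b. k = 2*(b*b)}"
  unfolding supp_def T2_def fps_nth_Abs_fps using supp_sum_nz by (force simp: mult.assoc)

lemma U3_supp: "supp U3 {k. \<exists>a. k = 3*(a*a)}"
  unfolding supp_def U3_def fps_nth_Abs_fps using supp_sum_nz by (force simp: mult.assoc)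

abbreviation EV :: "nat set" where "EV \<equiv> {k. even k}"

lemma T2_ev: "supp T2 EV"
  by (rule supp_mono[OF T2_supp]) auto

lemma supp_pow: "supp (T2^j) EV"
proof (induction j)
  case 0 then show ?case by (simp add: supp_def)
next
  case (Suc j)
  have "supp (T2 * T2^j) {a + b | a b. a \<in> EV \<and> b \<in> EV}" by (rule supp_mult[OF T2_ev Suc])
  then have "supp (T2 * T2^j) EV" by (rule supp_mono) auto
  then show ?case by simp
qed

lemma sym_sum:
  fixes f :: "nat \<Rightarrow> int"
  shows "(\<Sum>i=0..j. f i * f (j-i)) = 2 * (\<Sum>i\<in>{i. i \<le> j \<and> 2*i < j}. f i * f (j-i)) + (if even j then f (j div 2) * f (j div 2) else 0)"
proof -
  define A where "A = {i. i \<le> j \<and> 2*i < j}"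
  define B where "B = {i. i \<le> j \<and> j < 2*i}"
  define C where "C = {i. i \<le> j \<and> 2*i = j}"
  have fin: "finite A" "finite B" "finite C" by (auto simp: A_def B_def C_def)
  have un: "{0..j} = A \<union> B \<union> C" by (auto simp: A_def B_def C_def)
  have d1: "(\<Sum>i\<in>A \<union> B \<union> C. f i * f (j-i)) = (\<Sum>i\<in>A \<union> B. f i * f (j-i)) + (\<Sum>i\<in>C. f i * f (j-i))"
    by (rule sum.union_disjoint) (use fin in \<open>auto simp: A_def B_def C_def\<close>)
  have d2: "(\<Sum>i\<in>A \<union> B. f i * f (j-i)) = (\<Sum>i\<in>A. f i * f (j-i)) + (\<Sum>i\<in>B. f i * f (j-i))"
    by (rule sum.union_disjoint) (use fin in \<open>auto simp: A_def B_def\<close>)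
  have "(\<Sum>i=0..j. f i * f (j-i)) = (\<Sum>i\<in>A. f i * f (j-i)) + (\<Sum>i\<in>B. f i * f (j-i)) + (\<Sum>i\<in>C. f i * f (j-i))"
    unfolding un d1 d2 ..
  moreover have "(\<Sum>i\<in>B. f i * f (j-i)) = (\<Sum>i\<in>A. f i * f (j-i))"
    by (rule sum.reindex_bij_witness[where i="\<lambda>i. j - i" and j="\<lambda>i. j - i"])
       (auto simp: A_def B_def)
  moreover have "(\<Sum>i\<in>C. f i * f (j-i)) = (if even j then f (j div 2) * f (j div 2) else 0)"
  proof (cases "even j")
    case True
    then have "C = {j div 2}" by (auto simp: C_def)
    then show ?thesis using True by auto
  next
    case False
    then have "C = {}" by (auto simp: C_def)
    then show ?thesis using False by simp
  qed
  ultimately show ?thesis unfolding A_def by simp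
qed

definition VV :: "int fps" where "VV = Abs_fps (\<lambda>j. if even j then fps_nth T2 (j div 2) else 0)"
definition WW :: "int fps" where "WW = Abs_fps (\<lambda>j. (fps_nth (T2*T2) j - fps_nth VV j) div 2)"

lemma TT_eq: "T2 * T2 = VV + 2 * WW"
proof (rule fps_ext)
  fix j
  define t where "t = fps_nth T2"
  have "fps_nth (T2*T2) j = 2 * (\<Sum>i\<in>{i. i \<le> j \<and> 2*i < j}. t i * t (j-i)) + (if even j then t (j div 2) * t (j div 2) else 0)"
    unfolding fps_mult_nth t_def by (rule sym_sum)
  moreover have "even (x * x - x)" for x :: int by (cases "even x") auto
  ultimately have "2 dvd (fps_nth (T2*T2) j - fps_nth VV j)"
    by (auto simp: VV_def t_def)
  then show "fps_nth (T2*T2) j = fps_nth (VV + 2 * WW) j"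
    unfolding fps_add_nth num_nth WW_def fps_nth_Abs_fps by simp
qed

lemma VV_supp: "supp VV {k. \<exists>b. k = 4*(b*b)}"
  unfolding supp_def
proof (intro allI impI)
  fix k assume "fps_nth VV k \<noteq> 0"
  then have "even k" "fps_nth T2 (k div 2) \<noteq> 0" by (auto simp: VV_def split: if_splits)
  then obtain b where "k div 2 = 2*(b*b)" using T2_supp by (auto simp: supp_def)
  moreover have "k = 2 * (k div 2)" using \<open>even k\<close> by simp
  ultimately have "k = 4*(b*b)" by simp
  then show "k \<in> {k. \<exists>b. k = 4*(b*b)}" by blast
qed

lemma key_exp:
  fixes F :: "int fps"
  assumes "F * (1 + 2*T2) = 1 + 2*U3"
  shows "F = (1 - 2*T2 + 4*T2^2 - 8*T2^3) + 2*U3 - 4*(U3*T2) + 8*(U3*(T2*T2)) - 16*(U3*T2^3) + 16*(T2^4*F)"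
  using assms by algebra

lemma coeff_odd:
  assumes "odd N"
  shows "s N = 2*fps_nth U3 N - 4*fps_nth (U3*T2) N + 8*fps_nth (U3*(T2*T2)) N - 16*fps_nth (U3*T2^3) N + 16*fps_nth (T2^4*Abs_fps s) N"
proof -
  have eq: "Abs_fps s * (1 + 2*T2) = 1 + 2*U3" using main_identity Ph_eq Th3_eq by simp
  have z: "fps_nth (T2^j) N = 0" for j using supp_zero[OF supp_pow[of j]] assms by simp
  have z1: "fps_nth (1::int fps) N = 0" using odd_pos[OF assms] by simp
  have "s N = fps_nth (Abs_fps s) N" by simp
  also have "\<dots> = fps_nth ((1 - 2*T2 + 4*T2^2 - 8*T2^3) + 2*U3 - 4*(U3*T2) + 8*(U3*(T2*T2)) - 16*(U3*T2^3) + 16*(T2^4*Abs_fps s)) N"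
    using key_exp[OF eq] by simp
  also have "\<dots> = 2*fps_nth U3 N - 4*fps_nth (U3*T2) N + 8*fps_nth (U3*(T2*T2)) N - 16*fps_nth (U3*T2^3) N + 16*fps_nth (T2^4*Abs_fps s) N"
    using z[of 1] z[of 2] z[of 3] z1 by (simp only: fps_add_nth fps_sub_nth num_nth power_one_right)
  finally show ?thesis .
qed

lemma U3_zero: "N mod 24 \<notin> {0,3,12} \<Longrightarrow> fps_nth U3 N = 0"
proof (rule supp_zero[OF U3_supp])
  assume m: "N mod 24 \<notin> {0,3,12}"
  show "N \<notin> {k. \<exists>a. k = 3*(a*a)}"
  proof
    assume "N \<in> {k. \<exists>a. k = 3*(a*a)}"
    then obtain a where "N = 3*(a*a)" by blast
    then show False using nt1[of a] m by simp
  qed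
qed

lemma UT_zero: "N mod 24 \<in> {1,13,17,23} \<Longrightarrow> fps_nth (U3*T2) N = 0"
proof (rule supp_zero[OF supp_mult[OF U3_supp T2_supp]])
  assume "N mod 24 \<in> {1,13,17,23}"
  then show "N \<notin> {a + b | a b. a \<in> {k. \<exists>a. k = 3*(a*a)} \<and> b \<in> {k. \<exists>b. k = 2*(b*b)}}"
  proof (intro notI)
    assume m: "N mod 24 \<in> {1,13,17,23}" and "N \<in> {a + b | a b. a \<in> {k. \<exists>a. k = 3*(a*a)} \<and> b \<in> {k. \<exists>b. k = 2*(b*b)}}"
    then obtain a b where "N = 3*(a*a) + 2*(b*b)" by blast
    then show False using nt2[of a b] m by simp
  qed
qed

lemma UV_zero: "N mod 24 \<in> {1,13} \<Longrightarrow> fps_nth (U3*VV) N = 0"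
proof (rule supp_zero[OF supp_mult[OF U3_supp VV_supp]])
  assume "N mod 24 \<in> {1,13}"
  then show "N \<notin> {a + b | a b. a \<in> {k. \<exists>a. k = 3*(a*a)} \<and> b \<in> {k. \<exists>b. k = 4*(b*b)}}"
  proof (intro notI)
    assume m: "N mod 24 \<in> {1,13}" and "N \<in> {a + b | a b. a \<in> {k. \<exists>a. k = 3*(a*a)} \<and> b \<in> {k. \<exists>b. k = 4*(b*b)}}"
    then obtain a b where "N = 3*(a*a) + 4*(b*b)" by blast
    then show False using nt3[of a b] m by simp
  qed
qed

lemma UTT_even: "N mod 24 \<in> {1,13} \<Longrightarrow> 2 dvd fps_nth (U3*(T2*T2)) N"
proof -
  assume a: "N mod 24 \<in> {1,13}"
  have "U3*(T2*T2) = U3*VV + 2*(U3*WW)" unfolding TT_eq by (simp add: algebra_simps)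
  then have "fps_nth (U3*(T2*T2)) N = fps_nth (U3*VV) N + 2*fps_nth (U3*WW) N"
    by (simp only: fps_add_nth num_nth)
  then show ?thesis using UV_zero[OF a] by simp
qed

lemma cong4: "odd N \<Longrightarrow> N mod 24 \<notin> {0,3,12} \<Longrightarrow> 4 dvd s N"
proof -
  assume "odd N" "N mod 24 \<notin> {0,3,12}"
  then have "s N = 4 * (- fps_nth (U3*T2) N + 2*fps_nth (U3*(T2*T2)) N - 4*fps_nth (U3*T2^3) N + 4*fps_nth (T2^4*Abs_fps s) N)"
    using coeff_odd U3_zero by simp
  then show ?thesis by simp
qed

lemma cong8: "odd N \<Longrightarrow> N mod 24 \<in> {1,13,17,23} \<Longrightarrow> 8 dvd s N"
proof -
  assume "odd N" "N mod 24 \<in> {1,13,17,23}"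
  then have "s N = 8 * (fps_nth (U3*(T2*T2)) N - 2*fps_nth (U3*T2^3) N + 2*fps_nth (T2^4*Abs_fps s) N)"
    using coeff_odd U3_zero UT_zero by auto
  then show ?thesis by simp
qed

lemma cong16: "odd N \<Longrightarrow> N mod 24 \<in> {1,13} \<Longrightarrow> 16 dvd s N"
proof -
  assume o: "odd N" and m: "N mod 24 \<in> {1,13}"
  obtain w where w: "fps_nth (U3*(T2*T2)) N = 2 * w" using UTT_even[OF m] by blast
  have "s N = 16 * (w - fps_nth (U3*T2^3) N + fps_nth (T2^4*Abs_fps s) N)"
    using coeff_odd[OF o] U3_zero[of N] UT_zero[of N] m w by auto
  then show ?thesis by simp
qed

theorem theorem8:
  fixes n :: nat
  shows "4 dvd s (24 * n + 9) \<and> 4 dvd s (24 * n + 15) \<and> 4 dvd s (24 * n + 21) \<and>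
         8 dvd s (24 * n + 23) \<and> 8 dvd s (24 * n + 17) \<and> 16 dvd s (12 * n + 1)"
proof -
  have m12: "(12 * n + 1) mod 24 \<in> {1, 13}"
  proof (cases "even n")
    case True
    then obtain m where "n = 2 * m" by blast
    then show ?thesis by simp
  next
    case False
    then obtain m where "n = 2 * m + 1" using oddE by blast
    then show ?thesis by simp
  qed
  show ?thesis
    using cong4[of "24 * n + 9"] cong4[of "24 * n + 15"] cong4[of "24 * n + 21"]
      cong8[of "24 * n + 23"] cong8[of "24 * n + 17"] cong16[of "12 * n + 1"] m12
    by simp
qed

end
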